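(* Let $k_+,k_-,t$ be integers with $0\leq k_-\leq k_+$, $k_++k_-\geq 1$ and $t>0$, and let $M\triangleq [-k_-,k_+]^*$. Let $\overline{\psi}(x)$ be the largest prime not larger than $x$, and let $p\triangleq\overline{\psi}(k_++k_-+1)$. Then for any integer $m>0$ there exists $S\subseteq (\mathbb{Z}_{p^m})^t$ with $|S|=t\cdot\frac{p^m-1}{p-1}$ such that $(\mathbb{Z}_{p^m})^t\leq M \diamond_t S$, and thereby a lattice covering of $\mathbb{Z}^n$, $n=|S|$, by $\mathcal{B}(n,t,k_+,k_-)$ with density \[\delta = \frac{ \sum_{i=0}^{t} \binom{n}{i} (k_++k_-)^i }{ ( n(p-1)/t+1 )^t }=\frac{(t(k_++k_-))^t}{t!(p-1)^t}+o(1),\] where $o(1)$ refers to $m\to\infty$ (equivalently $n\to\infty$) with $t,k_\pm$ fixed.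
   Context: $[a,b]^*=\{a,a+1,\dots,b\}\setminus\{0\}$. For a finite Abelian group $G$, a finite set $M\subseteq\mathbb{Z}\setminus\{0\}$ and $S=\{s_1,\dots,s_n\}\subseteq G$, we write $G\le M\diamond_t S$ if for every $g\in G$ there is $\mathbf{e}\in(M\cup\{0\})^n$ of Hamming weight at most $t$ with $g=\sum_i e_is_i$. $\mathcal{B}(n,t,k_+,k_-)=\{\mathbf{x}\in\mathbb{Z}^n : -k_-\le x_i\le k_+ \text{ for all } i,\ \mathrm{wt}(\mathbf{x})\le t\}$ ($\mathrm{wt}$ = Hamming weight). A lattice covering of $\mathbb{Z}^n$ by $\mathcal{B}$ is a lattice $\Lambda\subseteq\mathbb{Z}^n$ with $\bigcup_{\mathbf{v}\in\Lambda}(\mathbf{v}+\mathcal{B})=\mathbb{Z}^n$; its density is $|\mathcal{B}|/\mathrm{vol}(\Lambda)$, $\mathrm{vol}(\Lambda)=|\mathbb{Z}^n/\Lambda|$. *)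

theory Defs
  imports "HOL-Analysis.Analysis" "HOL-Computational_Algebra.Primes"
begin

definition psi_bar :: "nat \<Rightarrow> nat" where
  "psi_bar x = (GREATEST q. prime q \<and> q \<le> x)"

definition int_range_star :: "int \<Rightarrow> int \<Rightarrow> int set" where
  "int_range_star a b = {a..b} - {0}"

text \<open>The group (Z_q)^t, elements as functions nat => int with coordinates
  i < t in {0..<q} and all other coordinates 0; addition is componentwise mod q.\<close>
definition Zq_vecs :: "int \<Rightarrow> nat \<Rightarrow> (nat \<Rightarrow> int) set" where
  "Zq_vecs q t = {g. (\<forall>i<t. 0 \<le> g i \<and> g i < q) \<and> (\<forall>i\<ge>t. g i = 0)}"

text \<open>(Z_q)^t \<le> M \<diamond>_w S: every group element is a combination
  sum_s e_s s (computed mod q) with coefficients in M \<union> {0} and Hamming weight at most w.\<close>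
definition group_covered :: "int \<Rightarrow> nat \<Rightarrow> int set \<Rightarrow> nat \<Rightarrow> (nat \<Rightarrow> int) set \<Rightarrow> bool" where
  "group_covered q t M w S \<longleftrightarrow>
     S \<subseteq> Zq_vecs q t \<and>
     (\<forall>g\<in>Zq_vecs q t. \<exists>e :: (nat \<Rightarrow> int) \<Rightarrow> int.
        (\<forall>s\<in>S. e s \<in> M \<union> {0}) \<and> card {s\<in>S. e s \<noteq> 0} \<le> w \<and>
        (\<forall>i<t. g i = (\<Sum>s\<in>S. e s * s i) mod q))"

definition Zn :: "nat \<Rightarrow> (nat \<Rightarrow> int) set" where
  "Zn n = {x. \<forall>i\<ge>n. x i = 0}"

definition hweight :: "nat \<Rightarrow> (nat \<Rightarrow> int) \<Rightarrow> nat" where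
  "hweight n x = card {i. i < n \<and> x i \<noteq> 0}"

definition err_ball :: "nat \<Rightarrow> nat \<Rightarrow> nat \<Rightarrow> nat \<Rightarrow> (nat \<Rightarrow> int) set" where
  "err_ball n t kp km = {x \<in> Zn n. (\<forall>i<n. - int km \<le> x i \<and> x i \<le> int kp) \<and> hweight n x \<le> t}"

definition int_lattice :: "nat \<Rightarrow> (nat \<Rightarrow> int) set \<Rightarrow> bool" where
  "int_lattice n L \<longleftrightarrow> L \<subseteq> Zn n \<and> (\<lambda>i. 0) \<in> L \<and>
     (\<forall>u\<in>L. \<forall>v\<in>L. (\<lambda>i. u i + v i) \<in> L) \<and> (\<forall>u\<in>L. (\<lambda>i. - u i) \<in> L)"

definition lattice_vol :: "nat \<Rightarrow> (nat \<Rightarrow> int) set \<Rightarrow> nat" where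
  "lattice_vol n L = card ((\<lambda>x. (\<lambda>v. (\<lambda>i. x i + v i)) ` L) ` Zn n)"

definition lattice_covering :: "nat \<Rightarrow> (nat \<Rightarrow> int) set \<Rightarrow> (nat \<Rightarrow> int) set \<Rightarrow> bool" where
  "lattice_covering n L B \<longleftrightarrow> int_lattice n L \<and>
     (\<Union>v\<in>L. (\<lambda>b. (\<lambda>i. v i + b i)) ` B) = Zn n"

definition covering_density :: "nat \<Rightarrow> (nat \<Rightarrow> int) set \<Rightarrow> (nat \<Rightarrow> int) set \<Rightarrow> real" where
  "covering_density n L B = real (card B) / real (lattice_vol n L)"

end

theory Submission
  imports Defs "HOL-Number_Theory.Cong"
begin


fun S1 :: "int \<Rightarrow> nat \<Rightarrow> int set" where
  "S1 p 0 = {}"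
| "S1 p (Suc m) = (\<lambda>z. 1 + p * z) ` {0..<p^m} \<union> (\<lambda>x. p * x) ` S1 p m"

lemma S1_range: "p \<ge> 2 \<Longrightarrow> S1 p m \<subseteq> {1..<p^m}"
proof (induction m)
  case 0 then show ?case by simp
next
  case (Suc m)
  have a: "1 + p * z < p^Suc m" if "0 \<le> z" "z < p^m" for z
  proof -
    have "p * z \<le> p * (p^m - 1)" using that Suc.prems by (intro mult_left_mono) auto
    then show ?thesis using Suc.prems by (simp add: algebra_simps)
  qed
  have b: "p * x \<in> {1..<p^Suc m}" if "x \<in> S1 p m" for x
  proof -
    have x: "1 \<le> x" "x < p^m" using Suc that by auto
    then have "p * x < p * p^m" using Suc.prems by simp
    moreover have "1 * 1 \<le> p * x" using mult_mono[of 1 p 1 x] x Suc.prems by simp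
    ultimately show ?thesis by simp
  qed
  have a': "1 + p * z \<in> {1..<p^Suc m}" if "z \<in> {0..<p^m}" for z
  proof -
    have "0 \<le> p * z" using that Suc.prems by simp
    then show ?thesis using a[of z] that by simp
  qed
  show ?case using a' b by auto
qed

lemma S1_card: "p \<ge> 2 \<Longrightarrow> card (S1 p m) = (\<Sum>i<m. nat p ^ i)"
proof (induction m)
  case 0 then show ?case by simp
next
  case (Suc m)
  have fin: "finite (S1 p m)" using S1_range[OF Suc.prems] by (rule finite_subset) auto
  have disj: "(\<lambda>z. 1 + p * z) ` {0..<p^m} \<inter> (\<lambda>x. p * x) ` S1 p m = {}"
  proof -
    have "1 + p * z \<noteq> p * x" for z x
    proof
      assume "1 + p * z = p * x"
      then have "p dvd 1 + p * z" by simp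
      then have "p dvd 1" by (simp add: dvd_add_left_iff)
      then show False using Suc.prems by (simp add: zdvd_imp_le) 
    qed
    then show ?thesis by auto
  qed
  have c1: "card ((\<lambda>z. 1 + p * z) ` {0..<p^m}) = nat p ^ m"
    using Suc.prems by (subst card_image) (auto simp: inj_on_def nat_power_eq)
  have c2: "card ((\<lambda>x. p * x) ` S1 p m) = card (S1 p m)"
    using Suc.prems by (subst card_image) (auto simp: inj_on_def)
  show ?case using Suc disj c1 c2 fin by (simp add: card_Un_disjoint)
qed

lemma S1_cover:
  fixes p :: int and kp km :: nat
  assumes pr: "prime p" and pk: "p \<le> int kp + int km + 1"
  shows "\<forall>g\<in>{0..<p^m}. g \<noteq> 0 \<longrightarrow> (\<exists>e\<in>{- int km..int kp} - {0}. \<exists>s\<in>S1 p m. g = (e * s) mod p^m)"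
proof (induction m)
  case 0 then show ?case by simp
next
  case (Suc m)
  have p2: "p \<ge> 2" using pr prime_ge_2_int by blast
  show ?case
  proof (intro ballI impI)
    fix g assume g: "g \<in> {0..<p^Suc m}" "g \<noteq> 0"
    show "\<exists>e\<in>{- int km..int kp} - {0}. \<exists>s\<in>S1 p (Suc m). g = (e * s) mod p^Suc m"
    proof (cases "p dvd g")
      case True
      then obtain g' where g': "g = p * g'" by blast
      have "g' \<in> {0..<p^m}" "g' \<noteq> 0" using g g' p2
        by (auto simp: zero_le_mult_iff)
      then obtain e s where es: "e \<in> {- int km..int kp} - {0}" "s \<in> S1 p m" "g' = (e * s) mod p^m"
        using Suc.IH by blast
      have "g = (e * (p * s)) mod p^Suc m"
      proof -
        have "g = (p * (e * s)) mod (p * p^m)" using es(3) g' by (simp only: mult_mod_right)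
        then show ?thesis by (metis mult.left_commute power_Suc)
      qed
      moreover have "p * s \<in> (\<lambda>x. p * x) ` S1 p m" using es(2) by blast
      then have "p * s \<in> S1 p (Suc m)" by simp
      ultimately show ?thesis using es(1) by blast
    next
      case False
      define r where "r = g mod p"
      have r: "0 < r" "r < p" using False p2 unfolding r_def
        by (auto simp: dvd_eq_mod_eq_0) (smt (verit) pos_mod_sign)
      obtain e where e: "e \<in> {- int km..int kp} - {0}" "e mod p = r"
      proof (cases "r \<le> int kp")
        case True then show ?thesis using that[of r] r by (auto simp: r_def)
      next
        case False
        have "r - p \<in> {- int km..int kp} - {0}" using False r pk by auto
        moreover have "(r - p) mod p = r" using r by (simp add: mod_pos_pos_trivial)
        ultimately show ?thesis using that by blast
      qed
      have "coprime e p"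
      proof -
        have "\<not> p dvd e" using e r by (auto simp: dvd_eq_mod_eq_0)
        then show ?thesis using pr by (metis prime_imp_coprime coprime_commute)
      qed
      then have "coprime e (p ^ Suc m)" by simp
      then obtain u where u: "[e * u = 1] (mod p ^ Suc m)" using cong_solve_coprime_int by blast
      define s where "s = (u * g) mod p ^ Suc m"
      have s0: "0 \<le> s" "s < p^Suc m" using p2 unfolding s_def by auto
      have "[e * u = 1] (mod p)" using u by (rule cong_dvd_modulus) simp
      moreover have "[e = g] (mod p)" using e r_def unfolding cong_def by simp
      ultimately have "[g * u = 1] (mod p)" by (metis cong_scalar_right cong_sym cong_trans)
      then have "s mod p = 1" unfolding s_def cong_def using p2
        by (simp add: mod_mod_cancel mult.commute)
      then have sdef: "s = 1 + p * (s div p)" by (metis add.commute mult_div_mod_eq)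
      have "s div p < p^m"
      proof -
        have e1: "p * (s div p) + s mod p = s" by (rule mult_div_mod_eq)
        have "s mod p \<ge> 0" using p2 by simp
        moreover have "s < p * p^m" using s0 by simp
        ultimately have "p * (s div p) < p * p^m" using e1 by linarith
        then show ?thesis using p2 by (simp add: mult_less_cancel_left)
      qed
      have "s div p \<ge> 0" using s0 p2 by (simp add: pos_imp_zdiv_nonneg_iff)
      have "g = (e * s) mod p ^ Suc m"
      proof -
        have "[e * (u * g) = 1 * g] (mod p ^ Suc m)" using u by (metis cong_scalar_right mult.assoc)
        then have "(e * (u * g)) mod p ^ Suc m = g" using g by (simp add: cong_def)
        then show ?thesis by (simp add: s_def mod_mult_right_eq)
      qed
      moreover have "s \<in> S1 p (Suc m)" using sdef \<open>s div p < p^m\<close> \<open>s div p \<ge> 0\<close>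
        by (simp del: power_Suc)
      ultimately show ?thesis using e by blast
    qed
  qed
qed


definition vecS :: "nat \<Rightarrow> int \<Rightarrow> nat \<Rightarrow> int" where
  "vecS c s = (\<lambda>i. if i = c then s else 0)"

definition Svec :: "nat \<Rightarrow> int set \<Rightarrow> (nat \<Rightarrow> int) set" where
  "Svec t T = (\<lambda>(c,s). vecS c s) ` ({..<t} \<times> T)"

lemma vecS_eq: "s \<noteq> 0 \<Longrightarrow> vecS c s = vecS c' s' \<longleftrightarrow> c = c' \<and> s = s'"
  unfolding vecS_def by (metis)

lemma Svec_card:
  assumes "finite T" "0 \<notin> T"
  shows "card (Svec t T) = t * card T"
proof -
  have "inj_on (\<lambda>(c,s). vecS c s) ({..<t} \<times> T)"
  proof (rule inj_onI)
    fix a b assume "a \<in> {..<t} \<times> T" "b \<in> {..<t} \<times> T" "(\<lambda>(c,s). vecS c s) a = (\<lambda>(c,s). vecS c s) b"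
    then show "a = b" using assms(2) by (cases a; cases b) (simp, metis vecS_eq)
  qed
  then show ?thesis unfolding Svec_def using assms by (simp add: card_image card_cartesian_product)
qed

lemma Svec_cov:
  fixes q :: int
  assumes T: "T \<subseteq> {1..<q}" "finite T"
    and cov: "\<forall>g\<in>{0..<q}. \<exists>e\<in>M \<union> {0}. \<exists>s\<in>T. g = (e * s) mod q"
  shows "group_covered q t M t (Svec t T)"
  unfolding group_covered_def
proof (intro conjI ballI)
  show "Svec t T \<subseteq> Zq_vecs q t"
    using T unfolding Svec_def Zq_vecs_def vecS_def by auto
next
  fix g assume g: "g \<in> Zq_vecs q t"
  have "\<forall>i. \<exists>es. i < t \<longrightarrow> fst es \<in> M \<union> {0} \<and> snd es \<in> T \<and> g i = (fst es * snd es) mod q"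
  proof (intro allI)
    fix i
    show "\<exists>es. i < t \<longrightarrow> fst es \<in> M \<union> {0} \<and> snd es \<in> T \<and> g i = (fst es * snd es) mod q"
    proof (cases "i < t")
      case True
      then have "g i \<in> {0..<q}" using g unfolding Zq_vecs_def by auto
      then obtain e s where "e \<in> M \<union> {0}" "s \<in> T" "g i = (e * s) mod q" using cov by blast
      then show ?thesis by (intro exI[of _ "(e,s)"]) auto
    qed auto
  qed
  then obtain es where es: "\<And>i. i < t \<Longrightarrow> fst (es i) \<in> M \<union> {0} \<and> snd (es i) \<in> T \<and> g i = (fst (es i) * snd (es i)) mod q"
    by metis
  define ec where "ec i = fst (es i)" for i
  define sc where "sc i = snd (es i)" for i
  have sc0: "sc i \<noteq> 0" if "i < t" for i using es[OF that] T unfolding sc_def by auto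
  define e where "e v = (if \<exists>c<t. v = vecS c (sc c) then ec (SOME c. c < t \<and> v = vecS c (sc c)) else 0)" for v
  have e_at: "e (vecS c (sc c)) = ec c" if "c < t" for c
  proof -
    have "(SOME c'. c' < t \<and> vecS c (sc c) = vecS c' (sc c')) = c"
      using that sc0 by (rule_tac some_equality) (auto simp: vecS_eq)
    then show ?thesis unfolding e_def using that by auto
  qed
  have e_else: "e v = 0" if "\<not> (\<exists>c<t. v = vecS c (sc c))" for v
    using that unfolding e_def by auto
  show "\<exists>e. (\<forall>s\<in>Svec t T. e s \<in> M \<union> {0}) \<and> card {s \<in> Svec t T. e s \<noteq> 0} \<le> t \<and>
          (\<forall>i<t. g i = (\<Sum>s\<in>Svec t T. e s * s i) mod q)"
  proof (intro exI[of _ e] conjI ballI allI impI)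
    fix v assume "v \<in> Svec t T"
    show "e v \<in> M \<union> {0}"
    proof (cases "\<exists>c<t. v = vecS c (sc c)")
      case True
      then obtain c where "c < t" "v = vecS c (sc c)" by blast
      then show ?thesis using e_at es unfolding ec_def by auto
    qed (simp add: e_else)
  next
    have "{s \<in> Svec t T. e s \<noteq> 0} \<subseteq> (\<lambda>c. vecS c (sc c)) ` {..<t}"
      using e_else by auto
    then have "card {s \<in> Svec t T. e s \<noteq> 0} \<le> card ((\<lambda>c. vecS c (sc c)) ` {..<t})"
      by (intro card_mono) auto
    also have "\<dots> \<le> t" using card_image_le[of "{..<t}"] by simp
    finally show "card {s \<in> Svec t T. e s \<noteq> 0} \<le> t" .
  next
    fix i assume i: "i < t"
    have fin: "finite (Svec t T)" unfolding Svec_def using T by auto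
    have mem: "vecS i (sc i) \<in> Svec t T" unfolding Svec_def using i es[OF i] sc_def by auto
    have rest: "e v * v i = 0" if "v \<in> Svec t T - {vecS i (sc i)}" for v
    proof -
      from that have "v \<in> (\<lambda>(c,s). vecS c s) ` ({..<t} \<times> T)" "v \<noteq> vecS i (sc i)"
        unfolding Svec_def by auto
      then obtain cs where cs: "cs \<in> {..<t} \<times> T" "v = (\<lambda>(c,s). vecS c s) cs" "v \<noteq> vecS i (sc i)" by blast
      obtain c s where v: "v = vecS c s" "c < t" "s \<in> T" "v \<noteq> vecS i (sc i)"
        using cs by (cases cs) auto
      show ?thesis
      proof (cases "c = i")
        case False then show ?thesis using v by (simp add: vecS_def)
      next
        case True
        have "\<not> (\<exists>c<t. v = vecS c (sc c))"
        proof
          assume "\<exists>c<t. v = vecS c (sc c)"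
          then obtain c' where "c' < t" "v = vecS c' (sc c')" by blast
          then show False using v True sc0 by (metis vecS_eq)
        qed
        then show ?thesis by (simp add: e_else)
      qed
    qed
    have "(\<Sum>s\<in>Svec t T. e s * s i) = e (vecS i (sc i)) * vecS i (sc i) i + (\<Sum>s\<in>Svec t T - {vecS i (sc i)}. e s * s i)"
      using fin mem by (rule sum.remove)
    also have "(\<Sum>s\<in>Svec t T - {vecS i (sc i)}. e s * s i) = 0"
      using rest by (intro sum.neutral) blast
    also have "e (vecS i (sc i)) * vecS i (sc i) i + 0 = ec i * sc i" using e_at[OF i] by (simp add: vecS_def)
    finally show "g i = (\<Sum>s\<in>Svec t T. e s * s i) mod q" using es[OF i] unfolding ec_def sc_def by simp
  qed
qed



lemma card_image_kernel:
  assumes "\<And>x y. x \<in> A \<Longrightarrow> y \<in> A \<Longrightarrow> f x = f y \<longleftrightarrow> g x = g y"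
  shows "card (f ` A) = card (g ` A)"
proof -
  define h where "h z = f (inv_into A g z)" for z
  have hg: "h (g x) = f x" if "x \<in> A" for x
  proof -
    have "inv_into A g (g x) \<in> A" "g (inv_into A g (g x)) = g x"
      using that by (auto intro: inv_into_into f_inv_into_f)
    then show ?thesis unfolding h_def using assms that by blast
  qed
  have "f ` A = h ` (g ` A)" using hg by (auto simp: image_image)
  moreover have "inj_on h (g ` A)"
    by (auto simp: inj_on_def hg assms)
  ultimately show ?thesis by (simp add: card_image)
qed

lemma card_Zq_vecs:
  assumes "q > 0"
  shows "card (Zq_vecs q t) = nat q ^ t"
proof -
  have eq: "Zq_vecs q t = (\<lambda>f i. if i < t then f i else 0) ` PiE {..<t} (\<lambda>_. {0..<q})"
  proof
    show "Zq_vecs q t \<subseteq> (\<lambda>f i. if i < t then f i else 0) ` PiE {..<t} (\<lambda>_. {0..<q})"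
    proof
      fix g assume g: "g \<in> Zq_vecs q t"
      have m1: "restrict g {..<t} \<in> PiE {..<t} (\<lambda>_. {0..<q})" using g unfolding Zq_vecs_def by auto
      have m2: "g = (\<lambda>i. if i < t then restrict g {..<t} i else 0)"
      proof (rule ext)
        fix i show "g i = (if i < t then restrict g {..<t} i else 0)"
          using g unfolding Zq_vecs_def by (cases "i < t") auto
      qed
      show "g \<in> (\<lambda>f i. if i < t then f i else 0) ` PiE {..<t} (\<lambda>_. {0..<q})" by (rule image_eqI[where f="\<lambda>f i. if i < t then f i else 0" and x="restrict g {..<t}", OF m2 m1])
    qed
  next
    show "(\<lambda>f i. if i < t then f i else 0) ` PiE {..<t} (\<lambda>_. {0..<q}) \<subseteq> Zq_vecs q t"
    proof (rule image_subsetI)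
      fix f assume f: "f \<in> PiE {..<t} (\<lambda>_. {0..<q})"
      have "\<forall>i<t. f i \<in> {0..<q}" using PiE_mem[OF f] by blast
      then show "(\<lambda>i. if i < t then f i else 0) \<in> Zq_vecs q t" unfolding Zq_vecs_def by simp
    qed
  qed
  have inj: "inj_on (\<lambda>f i. if i < t then f i else 0) (PiE {..<t} (\<lambda>_. {0..<q}))"
  proof (rule inj_onI)
    fix f g assume f: "f \<in> PiE {..<t} (\<lambda>_. {0..<q})" and g: "g \<in> PiE {..<t} (\<lambda>_. {0..<q})"
      and e: "(\<lambda>i. if i < t then f i else 0) = (\<lambda>i. if i < t then g i else 0)"
    show "f = g"
    proof (rule ext)
      fix i show "f i = g i"
      proof (cases "i < t")
        case True then show ?thesis using fun_cong[OF e, of i] by simp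
      next
        case False then show ?thesis using PiE_arb[OF f, of i] PiE_arb[OF g, of i] by simp
      qed
    qed
  qed
  have "card (Zq_vecs q t) = card (PiE {..<t} (\<lambda>_. {0..<q::int}))"
    using eq inj by (simp add: card_image)
  also have "\<dots> = nat q ^ t" by (simp add: card_PiE)
  finally show ?thesis .
qed

lemma lattice_part:
  fixes q :: int and n t kp km :: nat
  assumes q: "q > 0" and S: "finite S" "card S = n"
    and cov: "group_covered q t ({- int km..int kp} - {0}) t S"
  shows "\<exists>L. lattice_covering n L (err_ball n t kp km) \<and> lattice_vol n L = nat q ^ t"
proof -
  obtain \<sigma> where \<sigma>: "bij_betw \<sigma> {0..<n} S" using ex_bij_betw_nat_finite[OF S(1)] S(2) by blast
  define H where "H x i = (\<Sum>j\<in>{0..<n}. x j * \<sigma> j i)" for x :: "nat \<Rightarrow> int" and i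
  define \<phi> where "\<phi> x = (\<lambda>i. if i < t then H x i mod q else 0)" for x
  define L where "L = {x \<in> Zn n. \<forall>i<t. q dvd H x i}"
  define B where "B = err_ball n t kp km"
  have Hadd: "H (\<lambda>j. x j + y j) i = H x i + H y i" for x y i
    unfolding H_def by (simp add: algebra_simps sum.distrib)
  have Hsub: "H (\<lambda>j. x j - y j) i = H x i - H y i" for x y i
    unfolding H_def by (simp add: algebra_simps sum_subtractf)
  have Hneg: "H (\<lambda>j. - x j) i = - H x i" for x i
    unfolding H_def by (simp add: sum_negf)
  have cov_b: "\<exists>b\<in>B. \<forall>i<t. g i = H b i mod q" if g: "g \<in> Zq_vecs q t" for g
  proof -
    obtain e where e: "\<forall>s\<in>S. e s \<in> ({- int km..int kp} - {0}) \<union> {0}"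
        "card {s\<in>S. e s \<noteq> 0} \<le> t" "\<forall>i<t. g i = (\<Sum>s\<in>S. e s * s i) mod q"
      using cov g unfolding group_covered_def by blast
    define b where "b j = (if j < n then e (\<sigma> j) else 0)" for j
    have Hb: "H b i = (\<Sum>s\<in>S. e s * s i)" for i
    proof -
      have "H b i = (\<Sum>j\<in>{0..<n}. e (\<sigma> j) * \<sigma> j i)" unfolding H_def b_def by (rule sum.cong) auto
      also have "\<dots> = (\<Sum>s\<in>S. e s * s i)" using sum.reindex_bij_betw[OF \<sigma>, of "\<lambda>s. e s * s i"] by simp
      finally show ?thesis .
    qed
    have "{i. i < n \<and> b i \<noteq> 0} = {j \<in> {0..<n}. e (\<sigma> j) \<noteq> 0}" unfolding b_def by auto
    then have "hweight n b = card {j \<in> {0..<n}. e (\<sigma> j) \<noteq> 0}" unfolding hweight_def by simp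
    also have "\<dots> = card {s\<in>S. e s \<noteq> 0}"
    proof -
      have "bij_betw \<sigma> {j \<in> {0..<n}. e (\<sigma> j) \<noteq> 0} {s\<in>S. e s \<noteq> 0}"
        using \<sigma> unfolding bij_betw_def inj_on_def by auto
      then show ?thesis by (rule bij_betw_same_card)
    qed
    finally have hw: "hweight n b \<le> t" using e(2) by simp
    have "b \<in> B" unfolding B_def err_ball_def Zn_def
    proof (intro CollectI conjI allI impI)
      fix i assume "i < n"
      then have "\<sigma> i \<in> S" using \<sigma> by (auto simp: bij_betw_def)
      then show "- int km \<le> b i" "b i \<le> int kp" using e(1) \<open>i < n\<close> unfolding b_def by auto
    qed (auto simp: b_def hw)
    then show ?thesis using e(3) Hb by (intro bexI[of _ b]) auto
  qed
  have B_Zn: "B \<subseteq> Zn n" unfolding B_def err_ball_def by auto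
  have lat: "int_lattice n L"
    unfolding int_lattice_def L_def
  proof (intro conjI ballI allI impI)
    show "(\<lambda>i. 0) \<in> {x \<in> Zn n. \<forall>i<t. q dvd H x i}" by (simp add: Zn_def H_def)
  next
    fix u v assume u: "u \<in> {x \<in> Zn n. \<forall>i<t. q dvd H x i}" and v: "v \<in> {x \<in> Zn n. \<forall>i<t. q dvd H x i}"
    then show "(\<lambda>i. u i + v i) \<in> {x \<in> Zn n. \<forall>i<t. q dvd H x i}" by (auto simp: Zn_def Hadd)
  next
    fix u assume u: "u \<in> {x \<in> Zn n. \<forall>i<t. q dvd H x i}"
    then show "(\<lambda>i. - u i) \<in> {x \<in> Zn n. \<forall>i<t. q dvd H x i}" by (auto simp: Zn_def Hneg)
  qed auto
  have cover: "(\<Union>v\<in>L. (\<lambda>b. (\<lambda>i. v i + b i)) ` B) = Zn n"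
  proof
    show "(\<Union>v\<in>L. (\<lambda>b. (\<lambda>i. v i + b i)) ` B) \<subseteq> Zn n"
      using B_Zn unfolding L_def Zn_def by auto
  next
    show "Zn n \<subseteq> (\<Union>v\<in>L. (\<lambda>b. (\<lambda>i. v i + b i)) ` B)"
    proof
      fix x assume x: "x \<in> Zn n"
      have "\<phi> x \<in> Zq_vecs q t" unfolding \<phi>_def Zq_vecs_def using q by auto
      then obtain b where b: "b \<in> B" "\<forall>i<t. \<phi> x i = H b i mod q" using cov_b by blast
      define v where "v j = x j - b j" for j
      have "v \<in> L" unfolding L_def
      proof (intro CollectI conjI allI impI)
        show "v \<in> Zn n" using x b B_Zn unfolding v_def Zn_def by auto
        fix i assume "i < t"
        then have "H x i mod q = H b i mod q" using b unfolding \<phi>_def by auto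
        then show "q dvd H v i" unfolding v_def Hsub by (simp add: mod_eq_dvd_iff)
      qed
      moreover have "x = (\<lambda>i. v i + b i)" unfolding v_def by simp
      ultimately show "x \<in> (\<Union>v\<in>L. (\<lambda>b. (\<lambda>i. v i + b i)) ` B)" using b by blast
    qed
  qed
  define coset where "coset x = (\<lambda>v. (\<lambda>i. x i + v i)) ` L" for x :: "nat \<Rightarrow> int"
  have sub: "coset x \<subseteq> coset y" if "x \<in> Zn n" "y \<in> Zn n" "\<forall>i<t. q dvd H x i - H y i" for x y
  proof
    fix z assume "z \<in> coset x"
    then obtain v where v: "v \<in> L" "z = (\<lambda>i. x i + v i)" unfolding coset_def by blast
    define w where "w j = x j - y j + v j" for j
    have "w \<in> L" unfolding L_def
    proof (intro CollectI conjI allI impI)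
      show "w \<in> Zn n" using that v unfolding w_def Zn_def L_def by auto
      fix i assume i: "i < t"
      have "H w i = (H x i - H y i) + H v i"
        unfolding w_def using Hadd[of "\<lambda>j. x j - y j" v i] Hsub by simp
      then show "q dvd H w i" using that v i unfolding L_def by auto
    qed
    moreover have "z = (\<lambda>i. y i + w i)" unfolding v w_def by auto
    ultimately show "z \<in> coset y" unfolding coset_def by blast
  qed
  have ker: "coset x = coset y \<longleftrightarrow> \<phi> x = \<phi> y" if "x \<in> Zn n" "y \<in> Zn n" for x y
  proof
    assume "coset x = coset y"
    moreover have "y \<in> coset y" unfolding coset_def
      using lat unfolding int_lattice_def by (auto intro!: image_eqI[of _ _ "\<lambda>i. 0"])
    ultimately obtain v where v: "v \<in> L" "y = (\<lambda>i. x i + v i)" unfolding coset_def by auto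
    have "H y i = H x i + H v i" for i using v(2) Hadd by simp
    then show "\<phi> x = \<phi> y" using v(1) unfolding \<phi>_def L_def
      by (auto simp: fun_eq_iff mod_eq_dvd_iff)
  next
    assume "\<phi> x = \<phi> y"
    then have "\<forall>i<t. H x i mod q = H y i mod q" unfolding \<phi>_def by (metis (full_types))
    then have "\<forall>i<t. q dvd H x i - H y i" "\<forall>i<t. q dvd H y i - H x i"
      by (metis mod_eq_dvd_iff)+
    then show "coset x = coset y" using sub that by blast
  qed
  have img: "\<phi> ` Zn n = Zq_vecs q t"
  proof
    show "\<phi> ` Zn n \<subseteq> Zq_vecs q t" unfolding \<phi>_def Zq_vecs_def using q by auto
  next
    show "Zq_vecs q t \<subseteq> \<phi> ` Zn n"
    proof
      fix g assume g: "g \<in> Zq_vecs q t"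
      then obtain b where b: "b \<in> B" "\<forall>i<t. g i = H b i mod q" using cov_b by blast
      have "\<phi> b = g" using g b unfolding \<phi>_def Zq_vecs_def by auto
      then show "g \<in> \<phi> ` Zn n" using b B_Zn by blast
    qed
  qed
  have "lattice_vol n L = card (coset ` Zn n)" unfolding lattice_vol_def coset_def by simp
  also have "\<dots> = card (\<phi> ` Zn n)" by (rule card_image_kernel) (rule ker)
  also have "\<dots> = nat q ^ t" using img card_Zq_vecs[OF q] by simp
  finally show ?thesis using lat cover unfolding lattice_covering_def B_def by blast
qed



lemma card_ext0:
  fixes V :: "int set"
  assumes A: "finite A" and V: "finite V"
  shows "card {x::nat\<Rightarrow>int. (\<forall>i\<in>A. x i \<in> V) \<and> (\<forall>i. i \<notin> A \<longrightarrow> x i = 0)} = card V ^ card A"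
    and "finite {x::nat\<Rightarrow>int. (\<forall>i\<in>A. x i \<in> V) \<and> (\<forall>i. i \<notin> A \<longrightarrow> x i = 0)}"
proof -
  define F where "F f = (\<lambda>i. if i \<in> A then f i else (0::int))" for f :: "nat \<Rightarrow> int"
  have eq: "{x::nat\<Rightarrow>int. (\<forall>i\<in>A. x i \<in> V) \<and> (\<forall>i. i \<notin> A \<longrightarrow> x i = 0)} = F ` PiE A (\<lambda>_. V)"
  proof
    show "{x::nat\<Rightarrow>int. (\<forall>i\<in>A. x i \<in> V) \<and> (\<forall>i. i \<notin> A \<longrightarrow> x i = 0)} \<subseteq> F ` PiE A (\<lambda>_. V)"
    proof
      fix g assume g: "g \<in> {x::nat\<Rightarrow>int. (\<forall>i\<in>A. x i \<in> V) \<and> (\<forall>i. i \<notin> A \<longrightarrow> x i = 0)}"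
      have m1: "restrict g A \<in> PiE A (\<lambda>_. V)" using g by auto
      have m2: "g = F (restrict g A)"
      proof (rule ext)
        fix i show "g i = F (restrict g A) i"
          using g unfolding F_def by (cases "i \<in> A") auto
      qed
      show "g \<in> F ` PiE A (\<lambda>_. V)" by (rule image_eqI[where f=F and x="restrict g A", OF m2 m1])
    qed
  next
    show "F ` PiE A (\<lambda>_. V) \<subseteq> {x::nat\<Rightarrow>int. (\<forall>i\<in>A. x i \<in> V) \<and> (\<forall>i. i \<notin> A \<longrightarrow> x i = 0)}"
    proof (rule image_subsetI)
      fix f assume f: "f \<in> PiE A (\<lambda>_. V)"
      have "\<forall>i\<in>A. f i \<in> V" using PiE_mem[OF f] by blast
      then show "F f \<in> {x::nat\<Rightarrow>int. (\<forall>i\<in>A. x i \<in> V) \<and> (\<forall>i. i \<notin> A \<longrightarrow> x i = 0)}"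
        unfolding F_def by simp
    qed
  qed
  have inj: "inj_on F (PiE A (\<lambda>_. V))"
  proof (rule inj_onI)
    fix f g assume f: "f \<in> PiE A (\<lambda>_. V)" and g: "g \<in> PiE A (\<lambda>_. V)" and e: "F f = F g"
    show "f = g"
    proof (rule ext)
      fix i show "f i = g i"
      proof (cases "i \<in> A")
        case True then show ?thesis using fun_cong[OF e, of i] unfolding F_def by simp
      next
        case False then show ?thesis using PiE_arb[OF f, of i] PiE_arb[OF g, of i] by simp
      qed
    qed
  qed
  show "card {x::nat\<Rightarrow>int. (\<forall>i\<in>A. x i \<in> V) \<and> (\<forall>i. i \<notin> A \<longrightarrow> x i = 0)} = card V ^ card A"
    unfolding eq using inj A by (simp add: card_image card_PiE)
  show "finite {x::nat\<Rightarrow>int. (\<forall>i\<in>A. x i \<in> V) \<and> (\<forall>i. i \<notin> A \<longrightarrow> x i = 0)}"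
    unfolding eq using A V by (intro finite_imageI finite_PiE) auto
qed

lemma card_err_ball:
  "card (err_ball n t kp km) = (\<Sum>i\<le>t. (n choose i) * (kp + km) ^ i)"
proof -
  define V where "V = {- int km..int kp} - {0}"
  have cV: "card V = kp + km"
  proof -
    have "card V = card {- int km..int kp} - 1" unfolding V_def by (subst card_Diff_singleton) auto
    then show ?thesis by simp
  qed
  have fV: "finite V" unfolding V_def by simp
  define P where "P A = {x::nat\<Rightarrow>int. (\<forall>i\<in>A. x i \<in> V) \<and> (\<forall>i. i \<notin> A \<longrightarrow> x i = 0)}" for A
  define I where "I = {A. A \<subseteq> {0..<n} \<and> card A \<le> t}"
  have fI: "finite I" unfolding I_def by simp
  have supp: "{i. x i \<noteq> 0} = A" if "x \<in> P A" for x A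
    using that unfolding P_def V_def by auto
  have ball_eq: "err_ball n t kp km = \<Union>(P ` I)"
  proof
    show "err_ball n t kp km \<subseteq> \<Union>(P ` I)"
    proof
      fix x assume x: "x \<in> err_ball n t kp km"
      define A where "A = {i. i < n \<and> x i \<noteq> 0}"
      have "x \<in> P A" using x unfolding P_def A_def V_def err_ball_def Zn_def by auto
      moreover have "A \<in> I" using x unfolding I_def A_def err_ball_def hweight_def by auto
      ultimately show "x \<in> \<Union>(P ` I)" by blast
    qed
  next
    show "\<Union>(P ` I) \<subseteq> err_ball n t kp km"
    proof
      fix x assume "x \<in> \<Union>(P ` I)"
      then obtain A where A: "A \<in> I" "x \<in> P A" by blast
      have "{i. i < n \<and> x i \<noteq> 0} = A" using supp[OF A(2)] A(1) unfolding I_def by auto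
      then have "hweight n x \<le> t" using A(1) unfolding hweight_def I_def by simp
      moreover have "x \<in> Zn n" using A unfolding Zn_def I_def P_def by auto
      moreover have "- int km \<le> x i \<and> x i \<le> int kp" for i
        using A(2) unfolding P_def V_def by (cases "i \<in> A") auto
      ultimately show "x \<in> err_ball n t kp km" unfolding err_ball_def by auto
    qed
  qed
  have "card (\<Union>(P ` I)) = (\<Sum>A\<in>I. card (P A))"
  proof (rule card_UN_disjoint[OF fI])
    show "\<forall>A\<in>I. finite (P A)"
    proof
      fix A assume "A \<in> I"
      then have "A \<subseteq> {0..<n}" unfolding I_def by simp
      then have "finite A" by (rule finite_subset) simp
      then show "finite (P A)" unfolding P_def by (rule card_ext0(2)[OF _ fV])
    qed
    show "\<forall>A\<in>I. \<forall>B\<in>I. A \<noteq> B \<longrightarrow> P A \<inter> P B = {}" using supp by blast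
  qed
  also have "\<dots> = (\<Sum>A\<in>I. (kp + km) ^ card A)"
  proof (rule sum.cong)
    fix A assume "A \<in> I"
    then have "finite A" unfolding I_def by (auto intro: finite_subset)
    then show "card (P A) = (kp + km) ^ card A" unfolding P_def using card_ext0(1)[OF _ fV] cV by simp
  qed simp
  also have "\<dots> = (\<Sum>i\<le>t. (\<Sum>A\<in>{A \<in> I. card A = i}. (kp + km) ^ card A))"
    by (rule sum.group[symmetric]) (auto simp: fI I_def)
  also have "\<dots> = (\<Sum>i\<le>t. (n choose i) * (kp + km) ^ i)"
  proof (rule sum.cong)
    fix i assume "i \<in> {..t}"
    then have "{A \<in> I. card A = i} = {A. A \<subseteq> {0..<n} \<and> card A = i}" unfolding I_def by auto
    then show "(\<Sum>A\<in>{A \<in> I. card A = i}. (kp + km) ^ card A) = (n choose i) * (kp + km) ^ i"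
      using n_subsets[of "{0..<n}" i] by simp
  qed simp
  finally show ?thesis using ball_eq by simp
qed



lemma lim_aux1:
  fixes c :: real and j :: nat
  assumes c: "c > 0"
  shows "(\<lambda>N::nat. (real N - real j) / (real N * c + 1)) \<longlonglongrightarrow> 1 / c"
proof -
  have "(\<lambda>N::nat. (1 - real j * (1 / real N)) / (c + 1 / real N)) \<longlonglongrightarrow> (1 - real j * 0) / (c + 0)"
    using c by (intro tendsto_intros) auto
  then have l: "(\<lambda>N::nat. (1 - real j * (1 / real N)) / (c + 1 / real N)) \<longlonglongrightarrow> 1 / c" by simp
  have "eventually (\<lambda>N. (1 - real j * (1 / real N)) / (c + 1 / real N) = (real N - real j) / (real N * c + 1)) sequentially"
    using eventually_gt_at_top[of "0::nat"]
  proof (rule eventually_mono)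
    fix N :: nat assume "N > 0"
    then have "1 - real j * (1 / real N) = (real N - real j) / real N" "c + 1 / real N = (real N * c + 1) / real N"
      by (simp_all add: field_simps)
    then show "(1 - real j * (1 / real N)) / (c + 1 / real N) = (real N - real j) / (real N * c + 1)"
      using \<open>N > 0\<close> by simp
  qed
  then show ?thesis using l by (rule Lim_transform_eventually[rotated])
qed

lemma lim_aux2:
  fixes c :: real
  assumes c: "c > 0"
  shows "(\<lambda>N::nat. 1 / (real N * c + 1)) \<longlonglongrightarrow> 0"
proof -
  have "(\<lambda>N::nat. (1 / real N) / (c + 1 / real N)) \<longlonglongrightarrow> 0 / (c + 0)"
    using c by (intro tendsto_intros) auto
  then have l: "(\<lambda>N::nat. (1 / real N) / (c + 1 / real N)) \<longlonglongrightarrow> 0" by simp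
  have "eventually (\<lambda>N. (1 / real N) / (c + 1 / real N) = 1 / (real N * c + 1)) sequentially"
    using eventually_gt_at_top[of "0::nat"]
  proof (rule eventually_mono)
    fix N :: nat assume "N > 0"
    then show "(1 / real N) / (c + 1 / real N) = 1 / (real N * c + 1)"
      using c by (simp add: field_simps)
  qed
  then show ?thesis using l by (rule Lim_transform_eventually[rotated])
qed

lemma lim_term:
  fixes c k :: real and i t :: nat
  assumes c: "c > 0" and it: "i \<le> t"
  shows "(\<lambda>N::nat. real (N choose i) * k ^ i / (real N * c + 1) ^ t) \<longlonglongrightarrow>
           (if i = t then k ^ t / (fact t * c ^ t) else 0)"
proof -
  define d where "d N = real N * c + 1" for N :: nat
  have dpos: "d N > 0" for N
  proof -
    have "0 \<le> real N * c" using c by simp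
    then show ?thesis unfolding d_def by linarith
  qed
  have eq: "real (N choose i) * k ^ i / (real N * c + 1) ^ t =
     k ^ i / fact i * (\<Prod>j\<in>{0..<i}. (real N - real j) / d N) * (1 / d N) ^ (t - i)" for N
  proof -
    have b: "real (N choose i) = (\<Prod>j\<in>{0..<i}. real N - real j) / fact i"
      by (simp add: binomial_gbinomial gbinomial_prod_rev)
    have "(\<Prod>j\<in>{0..<i}. (real N - real j) / d N) = (\<Prod>j\<in>{0..<i}. real N - real j) / d N ^ i"
      by (simp add: prod_dividef)
    moreover have "d N ^ t = d N ^ i * d N ^ (t - i)" using it by (simp flip: power_add)
    ultimately show ?thesis unfolding b d_def[symmetric] using dpos[of N]
      by (simp add: field_simps power_one_over)
  qed
  have L1: "(\<lambda>N::nat. \<Prod>j\<in>{0..<i}. (real N - real j) / d N) \<longlonglongrightarrow> (\<Prod>j\<in>{0..<i}. 1 / c)"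
    unfolding d_def by (intro tendsto_prod lim_aux1 c)
  have L2: "(\<lambda>N::nat. (1 / d N) ^ (t - i)) \<longlonglongrightarrow> 0 ^ (t - i)"
    unfolding d_def by (intro tendsto_power lim_aux2 c)
  have "(\<lambda>N::nat. k ^ i / fact i * (\<Prod>j\<in>{0..<i}. (real N - real j) / d N) * (1 / d N) ^ (t - i))
      \<longlonglongrightarrow> k ^ i / fact i * (\<Prod>j\<in>{0..<i}. 1 / c) * 0 ^ (t - i)"
    by (intro tendsto_mult L1 L2 tendsto_const)
  moreover have "k ^ i / fact i * (\<Prod>j\<in>{0..<i}. 1 / c) * (0::real) ^ (t - i) =
      (if i = t then k ^ t / (fact t * c ^ t) else 0)"
    using it by (auto simp: power_one_over field_simps)
  ultimately show ?thesis unfolding eq by simp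
qed

lemma lim_main:
  fixes c k :: real and t :: nat
  assumes c: "c > 0"
  shows "(\<lambda>N::nat. (\<Sum>i\<le>t. real (N choose i) * k ^ i) / (real N * c + 1) ^ t) \<longlonglongrightarrow>
           k ^ t / (fact t * c ^ t)"
proof -
  have "(\<lambda>N::nat. \<Sum>i\<le>t. real (N choose i) * k ^ i / (real N * c + 1) ^ t) \<longlonglongrightarrow>
           (\<Sum>i\<le>t. (if i = t then k ^ t / (fact t * c ^ t) else 0))"
    by (intro tendsto_sum lim_term c) simp
  then show ?thesis by (simp add: sum_divide_distrib)
qed

lemma geom_nat:
  fixes p :: nat assumes "p \<ge> 1"
  shows "(p - 1) * (\<Sum>i<m. p ^ i) = p ^ m - 1"
proof -
  have "int ((p - 1) * (\<Sum>i<m. p ^ i)) = (int p - 1) * (\<Sum>i<m. int p ^ i)"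
    using assms by (simp add: of_nat_diff)
  also have "\<dots> = int p ^ m - 1" by (simp add: power_diff_1_eq)
  also have "\<dots> = int (p ^ m - 1)" using assms by (simp add: of_nat_diff)
  finally show ?thesis by (simp only: of_nat_eq_iff)
qed

lemma psi_bar_prop:
  assumes "x \<ge> 2"
  shows "prime (psi_bar x) \<and> psi_bar x \<le> x"
  unfolding psi_bar_def
  by (rule GreatestI_nat[where k=2 and b=x]) (use assms in auto)

theorem corollary11:
  fixes kp km t :: nat
  assumes "km \<le> kp" and "kp + km \<ge> 1" and "t > 0"
  defines "M \<equiv> int_range_star (- int km) (int kp)"
      and "p \<equiv> psi_bar (kp + km + 1)"
  defines "n \<equiv> (\<lambda>m::nat. t * (p ^ m - 1) div (p - 1))"
      and "\<delta> \<equiv> (\<lambda>m::nat. let N = t * (p ^ m - 1) div (p - 1) in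
                    (\<Sum>i\<le>t. real (N choose i) * real (kp + km) ^ i)
                       / (real N * real (p - 1) / real t + 1) ^ t)"
  shows "(\<forall>m>0. (\<exists>S. card S = n m \<and> group_covered (int (p ^ m)) t M t S) \<and>
            (\<exists>L. lattice_covering (n m) L (err_ball (n m) t kp km) \<and>
                 covering_density (n m) L (err_ball (n m) t kp km) = \<delta> m))
       \<and> (\<delta> \<longlonglongrightarrow> (real t * real (kp + km)) ^ t / (fact t * real (p - 1) ^ t))"
proof -
  have pp: "prime p" "p \<le> kp + km + 1" using psi_bar_prop[of "kp + km + 1"] assms(2) unfolding p_def by auto
  have p2: "p \<ge> 2" using pp(1) prime_ge_2_nat by blast
  have p2i: "int p \<ge> 2" using p2 by simp
  have Mdef: "M = {- int km..int kp} - {0}" unfolding M_def int_range_star_def by simp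
  have n_eq: "n m = t * (\<Sum>i<m. p ^ i)" for m
  proof -
    have e: "t * (p ^ m - 1) = (p - 1) * (t * (\<Sum>i<m. p ^ i))"
      using geom_nat[of p m] p2 by (simp add: algebra_simps)
    have "n m = (p - 1) * (t * (\<Sum>i<m. p ^ i)) div (p - 1)" unfolding n_def e ..
    then show ?thesis using p2 by simp
  qed
  have n_mul: "real (n m) * real (p - 1) = real t * (real p ^ m - 1)" for m
  proof -
    have "n m * (p - 1) = t * (p ^ m - 1)" unfolding n_eq using geom_nat[of p m] p2
      by (simp add: algebra_simps)
    then have "real (n m * (p - 1)) = real (t * (p ^ m - 1))" by (simp only:)
    moreover have "p ^ m \<ge> 1" using p2 by simp
    ultimately show ?thesis by (simp add: of_nat_diff)
  qed
  have part1: "(\<exists>S. card S = n m \<and> group_covered (int (p ^ m)) t M t S) \<and>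
            (\<exists>L. lattice_covering (n m) L (err_ball (n m) t kp km) \<and>
                 covering_density (n m) L (err_ball (n m) t kp km) = \<delta> m)" if m: "m > 0" for m
  proof -
    define T where "T = S1 (int p) m"
    have q: "int (p ^ m) = int p ^ m" by simp
    have Trange: "T \<subseteq> {1..<int (p ^ m)}" unfolding T_def q using S1_range[OF p2i] .
    have Tfin: "finite T" using Trange by (rule finite_subset) simp
    have T0: "0 \<notin> T" using Trange by auto
    have Tcard: "card T = (\<Sum>i<m. p ^ i)" unfolding T_def using S1_card[OF p2i] by simp
    have one: "1 \<in> T"
    proof -
      obtain m' where "m = Suc m'" using m by (cases m) auto
      moreover have "(0::int) \<in> {0..<int p ^ m'}" using p2 by simp
      ultimately show ?thesis unfolding T_def by (auto intro!: image_eqI[of 1 _ 0])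
    qed
    have prime_int: "prime (int p)" using pp(1) by simp
    have cov: "\<forall>g\<in>{0..<int (p ^ m)}. \<exists>e\<in>M \<union> {0}. \<exists>s\<in>T. g = (e * s) mod int (p ^ m)"
    proof
      fix g assume g: "g \<in> {0..<int (p ^ m)}"
      show "\<exists>e\<in>M \<union> {0}. \<exists>s\<in>T. g = (e * s) mod int (p ^ m)"
      proof (cases "g = 0")
        case True then show ?thesis using one by force
      next
        case False
        have "int p \<le> int kp + int km + 1" using pp(2) by simp
        from S1_cover[OF prime_int this, of m] g False obtain e s where
          "e \<in> {- int km..int kp} - {0}" "s \<in> S1 (int p) m" "g = (e * s) mod int p ^ m"
          unfolding q by blast
        then show ?thesis unfolding Mdef T_def q by blast
      qed
    qed
    define S where "S = Svec t T"
    have Scard: "card S = n m" unfolding S_def n_eq Svec_card[OF Tfin T0] Tcard ..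
    have Sfin: "finite S" unfolding S_def Svec_def using Tfin by simp
    have gc: "group_covered (int (p ^ m)) t M t S" unfolding S_def
      by (rule Svec_cov[OF Trange Tfin cov])
    have qpos: "int (p ^ m) > 0" using p2 by simp
    obtain L where L: "lattice_covering (n m) L (err_ball (n m) t kp km)"
      "lattice_vol (n m) L = nat (int (p ^ m)) ^ t"
      using lattice_part[OF qpos Sfin Scard, where t=t and kp=kp and km=km] gc unfolding Mdef by blast
    have "covering_density (n m) L (err_ball (n m) t kp km) = \<delta> m"
    proof -
      have nm: "t * (p ^ m - 1) div (p - 1) = n m" unfolding n_def by simp
      have den: "real (n m) * real (p - 1) / real t + 1 = real p ^ m"
        using n_mul[of m] assms(3) by simp
      have "covering_density (n m) L (err_ball (n m) t kp km)
          = real (\<Sum>i\<le>t. (n m choose i) * (kp + km) ^ i) / real ((p ^ m) ^ t)"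
        unfolding covering_density_def card_err_ball L(2) by simp
      also have "\<dots> = (\<Sum>i\<le>t. real (n m choose i) * real (kp + km) ^ i) / (real p ^ m) ^ t"
        by simp
      also have "\<dots> = \<delta> m" unfolding \<delta>_def Let_def nm den ..
      finally show ?thesis .
    qed
    then show ?thesis using Scard gc L(1) by blast
  qed
  define c where "c = real (p - 1) / real t"
  have cpos: "c > 0" unfolding c_def using p2 assms(3) by simp
  have lim: "(\<lambda>N::nat. (\<Sum>i\<le>t. real (N choose i) * real (kp + km) ^ i) / (real N * c + 1) ^ t)
      \<longlonglongrightarrow> real (kp + km) ^ t / (fact t * c ^ t)"
    by (rule lim_main[OF cpos])
  have nlim: "filterlim n sequentially sequentially"
  proof (rule filterlim_at_top_mono[OF filterlim_ident])
    show "eventually (\<lambda>m. m \<le> n m) sequentially"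
    proof (rule always_eventually, rule allI)
      fix m
      have "(\<Sum>i<m. (1::nat)) \<le> (\<Sum>i<m. p ^ i)" using p2 by (intro sum_mono) simp
      also have "\<dots> \<le> t * (\<Sum>i<m. p ^ i)" using assms(3) by simp
      finally show "m \<le> n m" unfolding n_eq by simp
    qed
  qed
  have "(\<lambda>m. (\<Sum>i\<le>t. real (n m choose i) * real (kp + km) ^ i) / (real (n m) * c + 1) ^ t)
      \<longlonglongrightarrow> real (kp + km) ^ t / (fact t * c ^ t)"
    by (rule filterlim_compose[OF lim nlim])
  moreover have "(\<lambda>m. (\<Sum>i\<le>t. real (n m choose i) * real (kp + km) ^ i) / (real (n m) * c + 1) ^ t) = \<delta>"
    unfolding \<delta>_def c_def n_def Let_def by (simp add: times_divide_eq_right)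
  moreover have "real (kp + km) ^ t / (fact t * c ^ t) = (real t * real (kp + km)) ^ t / (fact t * real (p - 1) ^ t)"
  proof -
    have h: "a ^ t / (f * (d / b) ^ t) = (b * a) ^ t / (f * d ^ t)" if "b \<noteq> 0" "d \<noteq> 0" "f \<noteq> 0"
      for a b d f :: real
      using that by (simp add: power_divide power_mult_distrib field_simps)
    show ?thesis unfolding c_def using p2 assms(3) by (intro h) auto
  qed
  ultimately have "\<delta> \<longlonglongrightarrow> (real t * real (kp + km)) ^ t / (fact t * real (p - 1) ^ t)" by simp
  then show ?thesis using part1 by blast
qed

end
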